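(* For every $d\ge 1$ there is a constant $C_d$ such that the following holds. Let $\sigma\in(0,1)$ and let $L$ be a finite set of closed line segments in $\mathbb{R}^d$ such that (i) $L$ is $\sigma$-exposed and (ii) $\bigcap_{s\in L} s\neq\emptyset$. Then $|L|\le C_d/\sigma^{d+2}$.
   Context: For sets $X, Y\subseteq\mathbb{R}^d$ and $\sigma>0$, $X$ $\sigma$-shadows $Y$ if $\max_{q\in Y} \mathrm{dist}(q, X) \le \sigma\cdot \mathrm{diam}(Y)$, where $\mathrm{dist}(q,X)=\min_{p\in X}\|q-p\|$. A set of objects is $\sigma$-exposed if no object in the set $\sigma$-shadows another (distinct) object of the set. *)

theory Defs
  imports "HOL-Analysis.Analysis"
begin

definition shadows :: "real \<Rightarrow> ('a::metric_space) set \<Rightarrow> 'a set \<Rightarrow> bool" where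
  "shadows \<sigma> X Y \<longleftrightarrow> (\<forall>q\<in>Y. infdist q X \<le> \<sigma> * diameter Y)"

definition exposed :: "real \<Rightarrow> ('a::metric_space) set set \<Rightarrow> bool" where
  "exposed \<sigma> L \<longleftrightarrow> (\<forall>X\<in>L. \<forall>Y\<in>L. X \<noteq> Y \<longrightarrow> \<not> shadows \<sigma> X Y)"

definition is_segment :: "('a::real_vector) set \<Rightarrow> bool" where
  "is_segment s \<longleftrightarrow> (\<exists>a b. a \<noteq> b \<and> s = closed_segment a b)"

end

theory Submission
  imports Defs
begin

lemma pt_in_seg:
  fixes p u :: "'a::real_vector"
  assumes "-\<alpha> \<le> s" "s \<le> \<beta>" "0 < \<alpha> + \<beta>"
  shows "p + s *\<^sub>R u \<in> closed_segment (p - \<alpha> *\<^sub>R u) (p + \<beta> *\<^sub>R u)"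
proof -
  define r where "r = (s + \<alpha>) / (\<alpha> + \<beta>)"
  have r: "0 \<le> r" "r \<le> 1" using assms by (auto simp: r_def field_simps)
  have "r * (\<alpha> + \<beta>) - \<alpha> = s" using assms by (simp add: r_def)
  hence "(1 - r) *\<^sub>R (p - \<alpha> *\<^sub>R u) + r *\<^sub>R (p + \<beta> *\<^sub>R u) = p + s *\<^sub>R u"
    by (simp add: algebra_simps) (metis scaleR_left.add scaleR_left_diff_distrib add.commute)
  thus ?thesis using r unfolding closed_segment_def
    by (intro CollectI exI[of _ r]) simp
qed

lemma endpoint:
  fixes uX uY :: "'a::real_normed_vector"
  assumes "norm uY = 1" "norm (uY - uX) \<le> e" "0 \<le> A" "A \<le> l" "0 \<le> B" "A - k \<le> B" "0 \<le> e" "0 \<le> k"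
  shows "\<exists>c. 0 \<le> c \<and> c \<le> B \<and> norm (A *\<^sub>R uY - c *\<^sub>R uX) \<le> k + l * e"
proof (intro exI conjI)
  let ?c = "min A B"
  show "0 \<le> ?c" "?c \<le> B" using assms by auto
  have eq: "A *\<^sub>R uY - ?c *\<^sub>R uX = (A - ?c) *\<^sub>R uY + ?c *\<^sub>R (uY - uX)"
    by (simp add: algebra_simps)
  have "norm ((A - ?c) *\<^sub>R uY + ?c *\<^sub>R (uY - uX)) \<le> norm ((A - ?c) *\<^sub>R uY) + norm (?c *\<^sub>R (uY - uX))"
    by (rule norm_triangle_ineq)
  also have "norm ((A - ?c) *\<^sub>R uY) = \<bar>A - ?c\<bar>" using assms(1) by simp
  also have "\<bar>A - ?c\<bar> \<le> k" using assms by auto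
  also have "norm (?c *\<^sub>R (uY - uX)) = ?c * norm (uY - uX)" using assms by simp
  also have "?c * norm (uY - uX) \<le> l * e"
    using assms by (intro mult_mono) auto
  finally show "norm (A *\<^sub>R uY - ?c *\<^sub>R uX) \<le> k + l * e" using eq by simp
qed

lemma shadow_core:
  fixes p u1 u2 :: "'a::real_normed_vector"
  assumes n1: "norm u1 = 1" and n2: "norm u2 = 1"
    and nn: "0 \<le> a1" "0 \<le> b1" "0 \<le> a2" "0 \<le> b2"
    and pos2: "0 < a2 + b2" and le: "a2 + b2 \<le> a1 + b1"
    and ue: "norm (u2 - u1) \<le> e"
    and t: "\<bar>a1 / (a1 + b1) - a2 / (a2 + b2)\<bar> \<le> h"
    and h: "0 \<le> h" and e: "0 \<le> e" and he: "h + e \<le> \<sigma>"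
  shows "shadows \<sigma> (closed_segment (p - a1 *\<^sub>R u1) (p + b1 *\<^sub>R u1))
                   (closed_segment (p - a2 *\<^sub>R u2) (p + b2 *\<^sub>R u2))"
proof -
  define l1 where "l1 = a1 + b1"
  define l2 where "l2 = a2 + b2"
  define X where "X = closed_segment (p - a1 *\<^sub>R u1) (p + b1 *\<^sub>R u1)"
  define aY where "aY = p - a2 *\<^sub>R u2"
  define bY where "bY = p + b2 *\<^sub>R u2"
  define D where "D = h * l2 + l2 * e"
  have l2: "0 < l2" and l12: "l2 \<le> l1" using pos2 le by (auto simp: l1_def l2_def)
  have l1: "0 < l1" using l2 l12 by simp
  have t': "\<bar>a1 / l1 - a2 / l2\<bar> \<le> h" using t by (simp add: l1_def l2_def)
  have ta1: "a1 / l1 \<ge> 0" using nn l1 by simp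
  have "a1 = (a1 / l1) * l1" using l1 by simp
  also have "\<dots> \<ge> (a1 / l1) * l2" using ta1 l12 by (intro mult_left_mono) auto
  also have "(a1 / l1) * l2 \<ge> (a2 / l2 - h) * l2" using t' l2 by (intro mult_right_mono) auto
  also have "(a2 / l2 - h) * l2 = a2 - h * l2" using l2 by (simp add: algebra_simps)
  finally have Ba: "a2 - h * l2 \<le> a1" .
  have tb: "b1 / l1 = 1 - a1 / l1" "b2 / l2 = 1 - a2 / l2" using l1 l2
    by (auto simp: l1_def l2_def field_simps)
  have t'': "\<bar>b1 / l1 - b2 / l2\<bar> \<le> h" using t' tb by simp
  have tb1: "b1 / l1 \<ge> 0" using nn l1 by simp
  have "b1 = (b1 / l1) * l1" using l1 by simp
  also have "\<dots> \<ge> (b1 / l1) * l2" using tb1 l12 by (intro mult_left_mono) auto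
  also have "(b1 / l1) * l2 \<ge> (b2 / l2 - h) * l2" using t'' l2 by (intro mult_right_mono) auto
  also have "(b2 / l2 - h) * l2 = b2 - h * l2" using l2 by (simp add: algebra_simps)
  finally have Bb: "b2 - h * l2 \<le> b1" .
  have a2l: "a2 \<le> l2" "b2 \<le> l2" using nn by (auto simp: l2_def)
  obtain c where c: "0 \<le> c" "c \<le> b1" "norm (b2 *\<^sub>R u2 - c *\<^sub>R u1) \<le> h * l2 + l2 * e"
    using endpoint[of u2 u1 e b2 l2 b1 "h * l2"] n2 ue nn a2l Bb h e l2 by auto
  have xb: "p + c *\<^sub>R u1 \<in> X" unfolding X_def
    using c nn l1 by (intro pt_in_seg) (auto simp: l1_def)
  have db: "norm (bY - (p + c *\<^sub>R u1)) \<le> D"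
    using c(3) by (simp add: bY_def D_def)
  have "norm (- u2 - - u1) \<le> e" using ue by (simp add: norm_minus_commute)
  then obtain c' where c': "0 \<le> c'" "c' \<le> a1" "norm (a2 *\<^sub>R (- u2) - c' *\<^sub>R (- u1)) \<le> h * l2 + l2 * e"
    using endpoint[of "-u2" "-u1" e a2 l2 a1 "h * l2"] n2 nn a2l Ba h e l2 by auto
  have xa: "p + (- c') *\<^sub>R u1 \<in> X" unfolding X_def
    using c' nn l1 by (intro pt_in_seg) (auto simp: l1_def)
  have da: "norm (aY - (p + (- c') *\<^sub>R u1)) \<le> D"
    using c'(3) by (simp add: aY_def D_def algebra_simps)
  have diam: "l2 \<le> diameter (closed_segment aY bY)"
  proof -
    have "dist aY bY = l2"
      using n2 l2 by (simp add: aY_def bY_def dist_norm algebra_simps l2_def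
          flip: scaleR_left_distrib)
    moreover have "dist aY bY \<le> diameter (closed_segment aY bY)"
      by (intro diameter_bounded_bound compact_imp_bounded compact_segment) auto
    ultimately show ?thesis by simp
  qed
  have "D = (h + e) * l2" by (simp add: D_def algebra_simps)
  also have "\<dots> \<le> \<sigma> * l2" using he l2 by (intro mult_right_mono) auto
  finally have "D \<le> \<sigma> * l2" .
  moreover have "\<sigma> * l2 \<le> \<sigma> * diameter (closed_segment aY bY)"
    using diam he h e by (intro mult_left_mono) auto
  ultimately have Dle: "D \<le> \<sigma> * diameter (closed_segment aY bY)" by linarith
  show ?thesis
    unfolding shadows_def X_def[symmetric] aY_def[symmetric] bY_def[symmetric]
  proof
    fix q assume "q \<in> closed_segment aY bY"
    then obtain r where r: "0 \<le> r" "r \<le> 1" "q = (1 - r) *\<^sub>R aY + r *\<^sub>R bY"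
      unfolding closed_segment_def by blast
    define xa' where "xa' = p + (- c') *\<^sub>R u1"
    define xb' where "xb' = p + c *\<^sub>R u1"
    have xin: "(1 - r) *\<^sub>R xa' + r *\<^sub>R xb' \<in> X"
    proof -
      have cX: "convex X" unfolding X_def by (rule convex_closed_segment)
      have "xa' \<in> X" "xb' \<in> X" using xa xb xa'_def xb'_def by auto
      thus ?thesis using convexD[OF cX, of xa' xb' "1 - r" r] r by simp
    qed
    have "q - ((1 - r) *\<^sub>R xa' + r *\<^sub>R xb') = (1 - r) *\<^sub>R (aY - xa') + r *\<^sub>R (bY - xb')"
      using r(3) by (simp add: algebra_simps)
    hence "dist q ((1 - r) *\<^sub>R xa' + r *\<^sub>R xb') \<le> norm ((1 - r) *\<^sub>R (aY - xa')) + norm (r *\<^sub>R (bY - xb'))"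
      by (metis dist_norm norm_triangle_ineq)
    also have "\<dots> = (1 - r) * norm (aY - xa') + r * norm (bY - xb')" using r by simp
    also have "\<dots> \<le> (1 - r) * D + r * D"
      using r da db xa'_def xb'_def by (intro add_mono mult_left_mono) auto
    also have "\<dots> = D" by (simp add: algebra_simps)
    finally have "infdist q X \<le> D" using infdist_le[OF xin, of q] by linarith
    thus "infdist q X \<le> \<sigma> * diameter (closed_segment aY bY)" using Dle by linarith
  qed
qed

lemma seg_rep:
  fixes s :: "'a::real_normed_vector set"
  assumes "is_segment s" "p \<in> s"
  shows "\<exists>u a b. norm u = 1 \<and> 0 \<le> a \<and> 0 \<le> b \<and> 0 < a + b \<and>
           s = closed_segment (p - a *\<^sub>R u) (p + b *\<^sub>R u)"
proof -
  obtain x y where xy: "x \<noteq> y" "s = closed_segment x y" using assms(1) is_segment_def by blast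
  then obtain r where r: "0 \<le> r" "r \<le> 1" "p = (1 - r) *\<^sub>R x + r *\<^sub>R y"
    using assms(2) unfolding closed_segment_def by blast
  define l where "l = norm (y - x)"
  have l: "0 < l" using xy by (simp add: l_def)
  define u where "u = (1 / l) *\<^sub>R (y - x)"
  have nu: "norm u = 1" using l by (simp add: u_def l_def)
  have lu: "l *\<^sub>R u = y - x" using l by (simp add: u_def)
  have A1: "(r * l) *\<^sub>R u = r *\<^sub>R (y - x)" using lu by (metis scaleR_scaleR)
  have B1: "p - r *\<^sub>R (y - x) = x" unfolding r(3) by (simp add: algebra_simps)
  have e1: "p - (r * l) *\<^sub>R u = x" by (simp only: A1 B1)
  have A2: "((1 - r) * l) *\<^sub>R u = (1 - r) *\<^sub>R (y - x)" using lu by (metis scaleR_scaleR)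
  have B2: "p + (1 - r) *\<^sub>R (y - x) = y" unfolding r(3) by (simp add: algebra_simps)
  have e2: "p + ((1 - r) * l) *\<^sub>R u = y" by (simp only: A2 B2)
  show ?thesis
    by (intro exI[of _ u] exI[of _ "r * l"] exI[of _ "(1 - r) * l"])
       (use nu r l e1 e2 xy in \<open>auto simp: algebra_simps\<close>)
qed

lemma floor_close:
  fixes x y h :: real
  assumes "0 < h" "\<lfloor>x / h\<rfloor> = \<lfloor>y / h\<rfloor>"
  shows "\<bar>x - y\<bar> < h"
proof -
  have "\<bar>x / h - y / h\<bar> < 1"
    using assms(2) floor_correct[of "x/h"] floor_correct[of "y/h"] by linarith
  hence "\<bar>x - y\<bar> / h < 1" using assms(1) by (simp add: diff_divide_distrib[symmetric])
  thus ?thesis using assms(1) by (simp add: field_simps)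
qed

lemma floor_range:
  fixes x h :: real
  assumes "0 < h" "\<bar>x\<bar> \<le> 1"
  shows "\<lfloor>x / h\<rfloor> \<in> {-\<lceil>1 / h\<rceil>..\<lceil>1 / h\<rceil>}"
proof -
  have x: "-1 \<le> x" "x \<le> 1" using assms(2) by auto
  have "x / h \<le> 1 / h" using divide_right_mono[OF x(2), of h] assms(1) by simp
  moreover have "- (1 / h) \<le> x / h" using divide_right_mono[OF x(1), of h] assms(1) by simp
  moreover have "1 / h \<le> of_int \<lceil>1 / h\<rceil>" by (rule le_of_int_ceiling)
  ultimately have "x / h \<le> \<lceil>1 / h\<rceil>" "- of_int \<lceil>1 / h\<rceil> \<le> x / h" by linarith+
  thus ?thesis by (auto simp: le_floor_iff floor_le_iff)
qed

theorem mainTheorem6: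
  shows "\<exists>C::real. \<forall>(\<sigma>::real) (L :: (real ^ 'd) set set).
           0 < \<sigma> \<and> \<sigma> < 1 \<and> finite L \<and> (\<forall>s\<in>L. is_segment s) \<and>
           exposed \<sigma> L \<and> \<Inter>L \<noteq> {}
           \<longrightarrow> real (card L) \<le> C / \<sigma> ^ (CARD('d) + 2)"
proof -
  define d where "d = CARD('d)"
  define C :: real where "C = (2 * real d + 5) ^ (d + 1)"
  show ?thesis
  proof (intro exI[of _ C] allI impI)
    fix \<sigma> :: real and L :: "(real ^ 'd) set set"
    assume H: "0 < \<sigma> \<and> \<sigma> < 1 \<and> finite L \<and> (\<forall>s\<in>L. is_segment s) \<and>
           exposed \<sigma> L \<and> \<Inter>L \<noteq> {}"
    hence \<sigma>: "0 < \<sigma>" "\<sigma> < 1" and fin: "finite L" and seg: "\<forall>s\<in>L. is_segment s"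
      and ex: "exposed \<sigma> L" and ne: "\<Inter>L \<noteq> {}" by auto
    obtain p where p: "p \<in> \<Inter>L" using ne by blast
    define Q where "Q = (\<lambda>s (r :: (real ^ 'd) \<times> real \<times> real).
       norm (fst r) = 1 \<and> 0 \<le> fst (snd r) \<and> 0 \<le> snd (snd r) \<and> 0 < fst (snd r) + snd (snd r) \<and>
       s = closed_segment (p - fst (snd r) *\<^sub>R fst r) (p + snd (snd r) *\<^sub>R fst r))"
    have "\<forall>s\<in>L. \<exists>r. Q s r"
    proof
      fix s assume sL: "s \<in> L"
      hence "p \<in> s" using p by blast
      then obtain u a b where "norm u = 1 \<and> 0 \<le> a \<and> 0 \<le> b \<and> 0 < a + b \<and>
           s = closed_segment (p - a *\<^sub>R u) (p + b *\<^sub>R u)"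
        using seg_rep[of s p] seg sL by blast
      thus "\<exists>r. Q s r" by (intro exI[of _ "(u, a, b)"]) (simp add: Q_def)
    qed
    from bchoice[OF this] obtain R where R: "\<forall>s\<in>L. Q s (R s)" by blast
    define U where "U s = fst (R s)" for s
    define A where "A s = fst (snd (R s))" for s
    define B where "B s = snd (snd (R s))" for s
    have Rs: "norm (U s) = 1 \<and> 0 \<le> A s \<and> 0 \<le> B s \<and> 0 < A s + B s \<and>
        s = closed_segment (p - A s *\<^sub>R U s) (p + B s *\<^sub>R U s)" if "s \<in> L" for s
      using R that by (simp add: Q_def U_def A_def B_def)
    define h where "h = \<sigma> / (real d + 1)"
    have h: "0 < h" using \<sigma> by (simp add: h_def)
    define f where "f s = ((\<lambda>i. \<lfloor>U s $ i / h\<rfloor>), \<lfloor>(A s / (A s + B s)) / h\<rfloor>)" for s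
    define N where "N = \<lceil>1 / h\<rceil>"
    define T where "T = (PiE UNIV (\<lambda>_::'d. {-N..N})) \<times> {-N..N}"
    have fT: "f ` L \<subseteq> T"
    proof
      fix z assume "z \<in> f ` L"
      then obtain s where sL: "s \<in> L" and z: "z = f s" by blast
      have "\<bar>U s $ i\<bar> \<le> 1" for i using component_le_norm_cart[of "U s" i] Rs[OF sL] by simp
      hence c1: "\<lfloor>U s $ i / h\<rfloor> \<in> {-N..N}" for i using floor_range[OF h] N_def by blast
      have "\<bar>A s / (A s + B s)\<bar> \<le> 1" using Rs[OF sL] by (simp add: abs_if field_simps)
      hence c2: "\<lfloor>(A s / (A s + B s)) / h\<rfloor> \<in> {-N..N}" using floor_range[OF h] N_def by blast
      show "z \<in> T" using c1 c2 by (simp add: z f_def T_def PiE_iff)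
    qed
    have key: "shadows \<sigma> X Y" if XL: "X \<in> L" and YL: "Y \<in> L" and fe: "f X = f Y"
       and le: "A Y + B Y \<le> A X + B X" for X Y
    proof -
      have "\<lfloor>U X $ i / h\<rfloor> = \<lfloor>U Y $ i / h\<rfloor>" for i using fe by (simp add: f_def fun_eq_iff)
      hence ci: "\<bar>(U Y - U X) $ i\<bar> \<le> h" for i using floor_close[OF h] 
        by (metis abs_minus_commute less_imp_le vector_minus_component)
      have "norm (U Y - U X) \<le> (\<Sum>i\<in>UNIV. \<bar>(U Y - U X) $ i\<bar>)" by (rule norm_le_l1_cart)
      also have "\<dots> \<le> (\<Sum>i\<in>(UNIV::'d set). h)" by (intro sum_mono ci)
      also have "\<dots> = real d * h" by (simp add: d_def)
      finally have ue: "norm (U Y - U X) \<le> real d * h" .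
      have "\<lfloor>(A X / (A X + B X)) / h\<rfloor> = \<lfloor>(A Y / (A Y + B Y)) / h\<rfloor>" using fe by (simp add: f_def)
      hence t: "\<bar>A X / (A X + B X) - A Y / (A Y + B Y)\<bar> \<le> h" using floor_close[OF h] by fastforce
      have "h + real d * h = h * (real d + 1)" by (simp add: algebra_simps)
      also have "\<dots> = \<sigma>" by (simp add: h_def)
      finally have he: "h + real d * h \<le> \<sigma>" by simp
      have "shadows \<sigma> (closed_segment (p - A X *\<^sub>R U X) (p + B X *\<^sub>R U X))
                   (closed_segment (p - A Y *\<^sub>R U Y) (p + B Y *\<^sub>R U Y))"
        using Rs[OF XL] Rs[OF YL] le ue t h he
        by (intro shadow_core) auto
      thus ?thesis using Rs[OF XL] Rs[OF YL] by simp
    qed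
    have inj: "inj_on f L" unfolding inj_on_def
    proof (intro ballI impI)
      fix X Y assume XL: "X \<in> L" and YL: "Y \<in> L" and fe: "f X = f Y"
      show "X = Y"
      proof (rule ccontr)
        assume XY: "X \<noteq> Y"
        show False
        proof (cases "A Y + B Y \<le> A X + B X")
          case True
          then show False using key[OF XL YL fe] ex XL YL XY unfolding exposed_def by blast
        next
          case False
          then show False using key[OF YL XL fe[symmetric]] ex XL YL XY unfolding exposed_def by auto
        qed
      qed
    qed
    have finT: "finite T" unfolding T_def by (intro finite_cartesian_product finite_PiE) auto
    have cardL: "card L \<le> card T" by (rule card_inj_on_le[OF inj fT finT])
    have cardT: "card T = nat (2 * N + 1) ^ (d + 1)"
      unfolding T_def by (simp add: card_cartesian_product card_PiE d_def)
    have "0 < 1 / h" using h by simp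
    hence N0: "0 \<le> N" unfolding N_def by linarith
    have rT: "real (card T) = (2 * of_int N + 1) ^ (d + 1)"
      using N0 by (simp add: cardT)
    have "of_int N < 1 / h + 1" using ceiling_correct[of "1 / h"] by (simp add: N_def)
    also have "1 / h = (real d + 1) / \<sigma>" by (simp add: h_def)
    finally have "2 * of_int N + 1 < 2 * real d / \<sigma> + 2 / \<sigma> + 3"
      by (simp add: add_divide_distrib)
    also have "3 \<le> 3 / \<sigma>" using \<sigma> by (simp add: field_simps)
    finally have b1: "2 * of_int N + 1 \<le> (2 * real d + 5) / \<sigma>"
      by (simp add: add_divide_distrib)
    have "real (card L) \<le> real (card T)" using cardL by simp
    also have "\<dots> \<le> ((2 * real d + 5) / \<sigma>) ^ (d + 1)"
      unfolding rT using N0 b1 by (intro power_mono) auto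
    also have "\<dots> = C / \<sigma> ^ (d + 1)" by (simp add: C_def power_divide)
    also have "\<dots> \<le> C / \<sigma> ^ (d + 2)"
    proof (rule divide_left_mono)
      show "0 \<le> C" by (simp add: C_def)
      have "\<sigma> ^ (d + 2) = \<sigma> ^ (d + 1) * \<sigma>" by simp
      also have "\<dots> \<le> \<sigma> ^ (d + 1) * 1" using \<sigma> by (intro mult_left_mono) auto
      finally show "\<sigma> ^ (d + 2) \<le> \<sigma> ^ (d + 1)" by simp
      show "0 < \<sigma> ^ (d + 1) * \<sigma> ^ (d + 2)" using \<sigma> by simp
    qed
    finally show "real (card L) \<le> C / \<sigma> ^ (CARD('d) + 2)" by (simp add: d_def)
  qed
qed

end
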